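(* $\mathrm{DCFL}\not\subseteq \mathrm{REG}/n$. Equivalently, $\mathrm{REG}/n\neq\mathrm{DCFL}/n$.
   Context: $\mathrm{REG}$ is the family of regular languages and $\mathrm{DCFL}$ the family of deterministic context-free languages. An advice function is a map $h:\mathbb{N}\to\Gamma^*$, for some alphabet $\Gamma$, with $|h(n)|=n$ for all $n$. For strings $x=x_1\cdots x_n$ and $w=\sigma_1\cdots\sigma_n$ of the same length, $\begin{bmatrix}x\\ w\end{bmatrix}$ denotes the string $\begin{bmatrix}x_1\\ \sigma_1\end{bmatrix}\cdots\begin{bmatrix}x_n\\ \sigma_n\end{bmatrix}$ over the product alphabet of pairs of symbols. For a family $\mathcal{C}$ of languages, $\mathcal{C}/n$ is the family of all languages $L$ over an alphabet $\Sigma$ for which there exist an advice function $h$ and a language $L'\in\mathcal{C}$ such that for all $x\in\Sigma^*$: $x\in L$ iff $\begin{bmatrix}x\\ h(|x|)\end{bmatrix}\in L'$. *)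

theory Defs
  imports Main
begin

definition dfa_lang ::
  "'a set \<Rightarrow> (nat \<Rightarrow> 'a \<Rightarrow> nat) \<Rightarrow> nat \<Rightarrow> nat set \<Rightarrow> 'a list set" where
  "dfa_lang \<Sigma> \<delta> q0 F = {w \<in> lists \<Sigma>. foldl \<delta> q0 w \<in> F}"

definition regular_on :: "'a set \<Rightarrow> 'a list set \<Rightarrow> bool" where
  "regular_on \<Sigma> L \<longleftrightarrow> finite \<Sigma> \<and>
     (\<exists>(Q::nat set) \<delta> q0 F. finite Q \<and> q0 \<in> Q \<and> F \<subseteq> Q \<and>
        (\<forall>q\<in>Q. \<forall>a\<in>\<Sigma>. \<delta> q a \<in> Q) \<and> L = dfa_lang \<Sigma> \<delta> q0 F)"

text \<open>Transition function: state, input symbol or epsilon (None), top stack symbol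
  gives optionally a new state and a string replacing the top stack symbol.\<close>

type_synonym 'a dpda_trans = "nat \<Rightarrow> 'a option \<Rightarrow> nat \<Rightarrow> (nat \<times> nat list) option"

definition pda_step ::
  "'a dpda_trans \<Rightarrow> (nat \<times> 'a list \<times> nat list) \<Rightarrow> (nat \<times> 'a list \<times> nat list) \<Rightarrow> bool" where
  "pda_step \<delta> c c' \<longleftrightarrow>
     (\<exists>q w Z \<gamma> p \<beta>. c = (q, w, Z # \<gamma>) \<and> c' = (p, w, \<beta> @ \<gamma>) \<and> \<delta> q None Z = Some (p, \<beta>)) \<or>
     (\<exists>q a w Z \<gamma> p \<beta>. c = (q, a # w, Z # \<gamma>) \<and> c' = (p, w, \<beta> @ \<gamma>) \<and> \<delta> q (Some a) Z = Some (p, \<beta>))"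

definition is_dpda ::
  "'a set \<Rightarrow> nat set \<Rightarrow> nat set \<Rightarrow> 'a dpda_trans \<Rightarrow> nat \<Rightarrow> nat \<Rightarrow> nat set \<Rightarrow> bool" where
  "is_dpda \<Sigma> Q \<Gamma> \<delta> q0 Z0 F \<longleftrightarrow>
     finite \<Sigma> \<and> finite Q \<and> finite \<Gamma> \<and> q0 \<in> Q \<and> Z0 \<in> \<Gamma> \<and> F \<subseteq> Q \<and>
     (\<forall>q x Z p \<beta>. \<delta> q x Z = Some (p, \<beta>) \<longrightarrow>
         q \<in> Q \<and> Z \<in> \<Gamma> \<and> (\<forall>a. x = Some a \<longrightarrow> a \<in> \<Sigma>) \<and> p \<in> Q \<and> set \<beta> \<subseteq> \<Gamma>) \<and>
     (\<forall>q Z. \<delta> q None Z \<noteq> None \<longrightarrow> (\<forall>a. \<delta> q (Some a) Z = None))"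

definition dpda_lang :: "'a set \<Rightarrow> 'a dpda_trans \<Rightarrow> nat \<Rightarrow> nat \<Rightarrow> nat set \<Rightarrow> 'a list set" where
  "dpda_lang \<Sigma> \<delta> q0 Z0 F =
     {w \<in> lists \<Sigma>. \<exists>q \<gamma>. q \<in> F \<and> (pda_step \<delta>)\<^sup>*\<^sup>* (q0, w, [Z0]) (q, [], \<gamma>)}"

definition dcfl_on :: "'a set \<Rightarrow> 'a list set \<Rightarrow> bool" where
  "dcfl_on \<Sigma> L \<longleftrightarrow>
     (\<exists>Q \<Gamma> \<delta> q0 Z0 F. is_dpda \<Sigma> Q \<Gamma> \<delta> q0 Z0 F \<and> L = dpda_lang \<Sigma> \<delta> q0 Z0 F)"

text \<open>L over \<Sigma> is in REG/n iff there are a finite advice alphabet \<Gamma>, an advice function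
  h with |h n| = n, and a regular L' over \<Sigma> \<times> \<Gamma> such that x \<in> L iff the
  track word [x; h |x|] (= zip) is in L'.\<close>

definition reg_advice_on :: "'a set \<Rightarrow> 'a list set \<Rightarrow> bool" where
  "reg_advice_on \<Sigma> L \<longleftrightarrow>
     (\<exists>(\<Gamma>::nat set) (h::nat \<Rightarrow> nat list) (L'::('a \<times> nat) list set).
        finite \<Gamma> \<and> (\<forall>n. length (h n) = n \<and> set (h n) \<subseteq> \<Gamma>) \<and>
        regular_on (\<Sigma> \<times> \<Gamma>) L' \<and>
        (\<forall>x \<in> lists \<Sigma>. x \<in> L \<longleftrightarrow> zip x (h (length x)) \<in> L'))"

end

theory Submission
  imports Defs
begin

definition dT :: "nat dpda_trans" where
"dT q x Z = (if q = 0 then (case x of Some a \<Rightarrow>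
      (if a \<in> {0,1} \<and> Z \<in> {0,1,2} then Some (0,[a,Z])
       else if a = 2 \<and> Z \<in> {0,1,2} then Some (1,[Z]) else None) | None \<Rightarrow> None)
  else if q = 1 then (case x of Some a \<Rightarrow> (if a \<in> {0,1} \<and> Z = a then Some (1,[]) else None)
        | None \<Rightarrow> (if Z = 2 then Some (2,[2]) else None))
  else None)"

definition PL :: "nat list set" where
"PL = {w @ 2 # rev w | w. set w \<subseteq> {0,1}}"

definition Inv :: "nat list \<Rightarrow> nat \<times> nat list \<times> nat list \<Rightarrow> bool" where
"Inv x c \<longleftrightarrow> (\<exists>p u. set p \<subseteq> {0,1} \<and> x = p @ u \<and> c = (0,u, rev p @ [2])) \<or>
   (\<exists>w v t u. set w \<subseteq> {0,1} \<and> rev w = v @ t \<and> x = w @ 2 # v @ u \<and> c = (1,u,t @ [2])) \<or>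
   (\<exists>w u. set w \<subseteq> {0,1} \<and> x = w @ 2 # rev w @ u \<and> c = (2,u,[2]))"

lemma is_dpda_dT: "is_dpda {0,1,2} {0,1,2} {0,1,2} dT 0 2 {2}"
  unfolding is_dpda_def dT_def by (auto split: if_splits option.splits)

lemma inv_step:
  assumes "pda_step dT c c'" "Inv x c" shows "Inv x c'"
proof -
  from assms(2) consider
    (A) p u where "set p \<subseteq> {0,1}" "x = p @ u" "c = (0,u, rev p @ [2])"
  | (B) w v t u where "set w \<subseteq> {0,1}" "rev w = v @ t" "x = w @ 2 # v @ u" "c = (1,u,t @ [2])"
  | (C) w u where "set w \<subseteq> {0,1}" "x = w @ 2 # rev w @ u" "c = (2,u,[2])"
    unfolding Inv_def by blast
  then show ?thesis
  proof cases
    case A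
    from assms(1) A obtain a u' Z g p' b where
      st: "u = a # u'" "Z # g = rev p @ [2]" "c' = (p', u', b @ g)" "dT 0 (Some a) Z = Some (p', b)"
      unfolding pda_step_def dT_def by (auto split: if_splits)
    have Z: "Z \<in> {0,1,2}"
    proof (cases "rev p")
      case Nil then show ?thesis using st(2) by simp
    next
      case (Cons y ys) then have "y \<in> set p" by (metis list.set_intros(1) set_rev)
      then show ?thesis using st(2) Cons A(1) by auto
    qed
    show ?thesis
    proof (cases "a \<in> {0,1}")
      case True
      then have "p' = 0" "b = [a,Z]" using st(4) Z unfolding dT_def by auto
      then have "c' = (0, u', rev (p @ [a]) @ [2])" using st by simp
      moreover have "x = (p@[a]) @ u'" "set (p @ [a]) \<subseteq> {0,1}" using A st True by auto
      ultimately show ?thesis unfolding Inv_def by blast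
    next
      case False
      then have "a = 2" "p' = 1" "b = [Z]" using st(4) Z unfolding dT_def
        by (auto split: if_splits)
      then have "c' = (1, u', rev p @ [2])" using st by simp
      moreover have "x = p @ 2 # [] @ u'" using A st \<open>a = 2\<close> by auto
      ultimately show ?thesis unfolding Inv_def using A(1) by fastforce
    qed
  next
    case B
    have t01: "set t \<subseteq> {0,1}" using B(1,2) by (metis Un_subset_iff set_append set_rev)
    from assms(1) B consider
      (inp) a u' Z g p' b where "u = a # u'" "Z # g = t @ [2]" "c' = (p', u', b @ g)" "dT 1 (Some a) Z = Some (p', b)"
    | (eps) Z g p' b where "Z # g = t @ [2]" "c' = (p', u, b @ g)" "dT 1 None Z = Some (p', b)"
      unfolding pda_step_def by auto
    then show ?thesis
    proof cases
      case inp
      then have "a \<in> {0,1}" "Z = a" "p' = 1" "b = []" unfolding dT_def by (auto split: if_splits)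
      then have tne: "t \<noteq> []" using inp(2) by auto
      then obtain t' where t': "t = a # t'" using inp(2) \<open>Z = a\<close> by (cases t) auto
      then have "g = t' @ [2]" using inp(2) by simp
      then have "c' = (1, u', t' @ [2])" using inp \<open>b = []\<close> \<open>p'=1\<close> by simp
      moreover have "rev w = (v @ [a]) @ t'" "x = w @ 2 # (v@[a]) @ u'" using B t' inp by auto
      ultimately show ?thesis unfolding Inv_def using B(1) by blast
    next
      case eps
      then have "Z = 2" "p' = 2" "b = [2]" unfolding dT_def by (auto split: if_splits)
      have "t = []"
      proof (rule ccontr)
        assume "t \<noteq> []" then obtain y ys where "t = y # ys" by (cases t) auto
        then show False using eps(1) \<open>Z = 2\<close> t01 by auto
      qed
      then have "c' = (2, u, [2])" "x = w @ 2 # rev w @ u" using eps B \<open>p'=2\<close> \<open>b=[2]\<close> by auto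
      then show ?thesis unfolding Inv_def using B(1) by blast
    qed
  next
    case C
    then show ?thesis using assms(1) unfolding pda_step_def dT_def by auto
  qed
qed

lemma inv_steps:
  assumes "(pda_step dT)\<^sup>*\<^sup>* c c'" "Inv x c" shows "Inv x c'"
  using assms by (induction rule: rtranclp_induct) (auto intro: inv_step)

lemma push_run:
  "set p \<subseteq> {0,1} \<Longrightarrow> set s \<subseteq> {0,1} \<Longrightarrow> (pda_step dT)\<^sup>*\<^sup>* (0, p @ u, s @ [2]) (0, u, rev p @ s @ [2])"
proof (induction p arbitrary: s)
  case Nil then show ?case by simp
next
  case (Cons a p)
  have "pda_step dT (0, a # p @ u, s @ [2]) (0, p @ u, (a # s) @ [2])"
  proof (cases s)
    case Nil then show ?thesis using Cons.prems unfolding pda_step_def dT_def by auto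
  next
    case (Cons z zs) then show ?thesis using Cons.prems unfolding pda_step_def dT_def
      by auto
  qed
  moreover have "(pda_step dT)\<^sup>*\<^sup>* (0, p @ u, (a # s) @ [2]) (0, u, rev p @ (a # s) @ [2])"
    using Cons.IH[of "a # s"] Cons.prems by simp
  ultimately show ?case by (simp add: converse_rtranclp_into_rtranclp)
qed

lemma pop_run:
  "set v \<subseteq> {0,1} \<Longrightarrow> (pda_step dT)\<^sup>*\<^sup>* (1, v @ u, v @ g) (1, u, g)"
proof (induction v)
  case Nil then show ?case by simp
next
  case (Cons a v)
  have "pda_step dT (1, a # v @ u, a # v @ g) (1, v @ u, v @ g)"
    using Cons.prems unfolding pda_step_def dT_def by auto
  then show ?case using Cons by (simp add: converse_rtranclp_into_rtranclp)
qed

lemma dpda_PL: "dpda_lang {0,1,2} dT 0 2 {2} = PL"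
proof
  show "dpda_lang {0,1,2} dT 0 2 {2} \<subseteq> PL"
  proof
    fix x assume "x \<in> dpda_lang {0,1,2} dT 0 2 {2}"
    then obtain q g where "q \<in> {2}" "(pda_step dT)\<^sup>*\<^sup>* (0, x, [2]) (q, [], g)"
      unfolding dpda_lang_def by auto
    moreover have "Inv x (0, x, [2])" unfolding Inv_def by (rule disjI1, rule exI[of _ "[]"]) simp
    ultimately have "Inv x (2, [], g)" using inv_steps by auto
    then show "x \<in> PL" unfolding Inv_def PL_def by auto
  qed
next
  show "PL \<subseteq> dpda_lang {0,1,2} dT 0 2 {2}"
  proof
    fix x assume "x \<in> PL"
    then obtain w where w: "set w \<subseteq> {0,1}" "x = w @ 2 # rev w" unfolding PL_def by auto
    have "(pda_step dT)\<^sup>*\<^sup>* (0, w @ 2 # rev w, [] @ [2]) (0, 2 # rev w, rev w @ [] @ [2])"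
      using push_run[of w "[]"] w by simp
    moreover have "pda_step dT (0, 2 # rev w, rev w @ [2]) (1, rev w, rev w @ [2])"
    proof (cases "rev w")
      case Nil then show ?thesis unfolding pda_step_def dT_def by auto
    next
      case (Cons z zs) then have "z \<in> {0,1}" using w(1) by (metis list.set_intros(1) set_rev subsetD)
      then show ?thesis using Cons unfolding pda_step_def dT_def by auto
    qed
    moreover have "(pda_step dT)\<^sup>*\<^sup>* (1, rev w @ [], rev w @ [2]) (1, [], [2])"
      using pop_run[of "rev w" "[]" "[2]"] w by simp
    moreover have "pda_step dT (1, [], [2]) (2, [], [2])"
      unfolding pda_step_def dT_def by auto
    ultimately have "(pda_step dT)\<^sup>*\<^sup>* (0, x, [2]) (2, [], [2])" using w
      by (metis (no_types, lifting) append_Nil append_Nil2 rtranclp.rtrancl_into_rtrancl converse_rtranclp_into_rtranclp rtranclp_trans)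
    moreover have "x \<in> lists {0,1,2}" using w by auto
    ultimately show "x \<in> dpda_lang {0,1,2} dT 0 2 {2}" unfolding dpda_lang_def by auto
  qed
qed

lemma foldl_Q: "\<forall>q\<in>Q. \<forall>a\<in>A. \<delta> q a \<in> Q \<Longrightarrow> q \<in> Q \<Longrightarrow> set xs \<subseteq> A \<Longrightarrow> foldl \<delta> q xs \<in> Q"
  by (induction xs arbitrary: q) auto

lemma set_zip_sub: "set xs \<subseteq> A \<Longrightarrow> set ys \<subseteq> B \<Longrightarrow> set (zip xs ys) \<subseteq> A \<times> B"
  by (auto dest: set_zip_leftD set_zip_rightD)

lemma not_reg: "\<not> reg_advice_on {0,1,2} PL"
proof
  assume "reg_advice_on {0,1,2} PL"
  then obtain \<Gamma> :: "nat set" and h :: "nat \<Rightarrow> nat list" and L' where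
    hl: "\<forall>n. length (h n) = n \<and> set (h n) \<subseteq> \<Gamma>" and reg: "regular_on ({0,1,2} \<times> \<Gamma>) L'"
    and eq: "\<forall>x \<in> lists {0,1,2}. x \<in> PL \<longleftrightarrow> zip x (h (length x)) \<in> L'"
    unfolding reg_advice_on_def by blast
  from reg obtain Q :: "nat set" and \<delta> q0 F where fQ: "finite Q" and q0: "q0 \<in> Q"
    and cl: "\<forall>q\<in>Q. \<forall>a\<in>{0,1,2} \<times> \<Gamma>. \<delta> q a \<in> Q" and L': "L' = dfa_lang ({0,1,2} \<times> \<Gamma>) \<delta> q0 F"
    unfolding regular_on_def by blast
  define m where "m = card Q"
  define H where "H = h (2*m+1)"
  have H: "length H = 2*m+1" "set H \<subseteq> \<Gamma>" using hl unfolding H_def by auto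
  define W where "W = {xs. set xs \<subseteq> {0,1::nat} \<and> length xs = m}"
  define f where "f w = foldl \<delta> q0 (zip w (take m H))" for w
  have cardW: "card W = 2^m" unfolding W_def using card_lists_length_eq[of "{0,1::nat}" m] by (simp add: numeral_2_eq_2)
  have fW: "f ` W \<subseteq> Q"
  proof
    fix y assume "y \<in> f ` W"
    then obtain w where w: "w \<in> W" "y = f w" by auto
    have "set (zip w (take m H)) \<subseteq> {0,1,2} \<times> \<Gamma>"
      using w(1) H(2) set_take_subset[of m H] unfolding W_def by (intro set_zip_sub) auto
    then show "y \<in> Q" unfolding w(2) f_def using foldl_Q[OF cl q0] by blast
  qed
  have "\<not> inj_on f W"
  proof
    assume "inj_on f W"
    then have "card W \<le> card Q" using card_inj_on_le fW fQ by blast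
    then show False using cardW m_def less_exp[of "card Q"] by simp
  qed
  then obtain w1 w2 where w12: "w1 \<in> W" "w2 \<in> W" "w1 \<noteq> w2" "f w1 = f w2"
    unfolding inj_on_def by blast
  have key: "zip (w1' @ 2 # rev w2') H \<in> L' \<longleftrightarrow> foldl \<delta> (f w1') (zip (2 # rev w2') (drop m H)) \<in> F"
    if "w1' \<in> W" "w2' \<in> W" for w1' w2'
  proof -
    have z: "zip (w1' @ 2 # rev w2') H = zip w1' (take m H) @ zip (2 # rev w2') (drop m H)"
      using that unfolding W_def by (simp add: zip_append1)
    have "set (zip (w1' @ 2 # rev w2') H) \<subseteq> {0,1,2} \<times> \<Gamma>"
      using that H(2) unfolding W_def by (intro set_zip_sub) auto
    then show ?thesis unfolding L' dfa_lang_def z f_def by auto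
  qed
  have lw: "length (w1' @ 2 # rev w2') = 2*m+1" "w1' @ 2 # rev w2' \<in> lists {0,1,2}"
    if "w1' \<in> W" "w2' \<in> W" for w1' w2'
    using that unfolding W_def by auto
  have "w2 @ 2 # rev w2 \<in> PL" using w12(2) unfolding PL_def W_def by auto
  then have "zip (w2 @ 2 # rev w2) H \<in> L'" using eq lw[OF w12(2) w12(2)] unfolding H_def by simp
  then have "zip (w1 @ 2 # rev w2) H \<in> L'" using key[OF w12(2) w12(2)] key[OF w12(1) w12(2)] w12(4) by simp
  then have "w1 @ 2 # rev w2 \<in> PL" using eq lw[OF w12(1) w12(2)] unfolding H_def by simp
  then obtain w where w: "set w \<subseteq> {0,1}" "w1 @ 2 # rev w2 = w @ 2 # rev w" unfolding PL_def by auto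
  have "length w1 = m" "length w2 = m" using w12 unfolding W_def by auto
  then have "length w = length w1" using arg_cong[OF w(2), of length] by simp
  then have "w1 = w \<and> 2 # rev w2 = 2 # rev w" using w(2) by (simp add: append_eq_append_conv)
  then show False using w12(3) by simp
qed

theorem proposition3p6:
  shows "\<exists>(\<Sigma>::nat set) (L::nat list set). finite \<Sigma> \<and> dcfl_on \<Sigma> L \<and> \<not> reg_advice_on \<Sigma> L"
proof (intro exI conjI)
  show "finite {0,1,2::nat}" by simp
  show "dcfl_on {0,1,2} PL" unfolding dcfl_on_def
    by (rule exI[of _ "{0,1,2}"], rule exI[of _ "{0,1,2}"], rule exI[of _ dT], rule exI[of _ 0],
        rule exI[of _ 2], rule exI[of _ "{2}"]) (use is_dpda_dT dpda_PL in auto)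
  show "\<not> reg_advice_on {0,1,2} PL" by (rule not_reg)
qed

end
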